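(* Let $s\ge1$ and let $T\in\mathcal{T}(s)\setminus B(s\varpi_2)$ with $T$ not equal to the tableau all of whose $s$ columns are $\binom{1}{\bar1}$. Then there is a unique $a\in\{1,\dots,n,\bar n\}$ and a unique $m\in\mathbb{Z}_{>0}$ such that $T$ contains, as a sequence of consecutive columns, one of the following configurations (writing $\binom{a}{\bar a}^{m}$ for $m$ consecutive columns $\binom{a}{\bar a}$): (i) $\binom{a}{b_1}\binom{a}{\bar a}^{m}\binom{c_1}{d_1}$, where $b_1\ne\bar a$, and $c_1\neq a$ or $d_1\ne\bar a$; (ii) $\binom{b_2}{c_2}\binom{a}{\bar a}^{m}\binom{d_2}{\bar a}$, where $d_2\ne a$, and $b_2\ne a$ or $c_2\neq\bar a$; (iii) $\binom{b_3}{c_3}\binom{a}{\bar a}^{m+1}\binom{d_3}{e_3}$, where $b_3\ne a$ and $e_3\ne\bar a$; where a bounding column $\binom{c_1}{d_1}$, $\binom{b_2}{c_2}$, $\binom{b_3}{c_3}$ or $\binom{d_3}{e_3}$ may be absent when the block of columns $\binom{a}{\bar a}$ reaches the corresponding end of $T$, in which case the condition on it is vacuous.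
   Context: Let $n\ge4$. Alphabet: $1<2<\dots<n-1<\{n,\bar n\}<\overline{n-1}<\dots<\bar2<\bar1$, a partial order in which $n$ and $\bar n$ are incomparable; we set $\bar{\bar i}=i$. A tableau of shape $(k,k)$ is a sequence of $k$ columns, column $j$ having top entry $a_j$ and bottom entry $b_j$ from this alphabet; we write it $\binom{a_1}{b_1}\cdots\binom{a_k}{b_k}$ (here $\binom{x}{y}$ denotes a column with top $x$ and bottom $y$, not a binomial coefficient). Conditions: (C1) $a_j\le a_{j+1}$ and $b_j\le b_{j+1}$ for all $j$; (C2) $b_j\not\le a_j$ for all $j$; (C3) there is no $j$ and letter $x$ with $a_j=a_{j+1}=x$, $b_{j+1}=\bar x$, and no $j$ and $x$ with $a_j=x$, $b_j=b_{j+1}=\bar x$; (C4) there are no $j<j'$ with $\binom{a_j}{b_j}=\binom{n-1}{n}$ and $\binom{a_{j'}}{b_{j'}}=\binom{n}{\overline{n-1}}$, and no $j<j'$ with $\binom{a_j}{b_j}=\binom{n-1}{\bar n}$ and $\binom{a_{j'}}{b_{j'}}=\binom{\bar n}{\overline{n-1}}$; (C5) no column equals $\binom{1}{\bar1}$. $B(k\varpi_2)$ denotes the set of tableaux of shape $(k,k)$ satisfying (C1)--(C5) (the Kashiwara--Nakashima tableaux of type $D_n$ of shape $(k,k)$), and $\mathcal{T}(s)$ the set of tableaux of shape $(s,s)$ satisfying (C1), (C2) and (C4). *)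

theory Defs
  imports Main
begin

text \<open>Letters of the type D_n alphabet: Unb i stands for i, Bar i for bar i (1 <= i <= n).\<close>
datatype letter = Unb nat | Bar nat

fun valid_letter :: "nat \<Rightarrow> letter \<Rightarrow> bool" where
  "valid_letter n (Unb i) = (1 \<le> i \<and> i \<le> n)"
| "valid_letter n (Bar i) = (1 \<le> i \<and> i \<le> n)"

fun bar :: "letter \<Rightarrow> letter" where
  "bar (Unb i) = Bar i"
| "bar (Bar i) = Unb i"

text \<open>Position in the chain 1 < ... < n-1 < {n, bar n} < bar(n-1) < ... < bar 1.\<close>
fun rank :: "nat \<Rightarrow> letter \<Rightarrow> nat" where
  "rank n (Unb i) = i"
| "rank n (Bar i) = 2 * n - i"

text \<open>The partial order: n and bar n are incomparable.\<close>
definition le_D :: "nat \<Rightarrow> letter \<Rightarrow> letter \<Rightarrow> bool" where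
  "le_D n x y \<longleftrightarrow> x = y \<or> rank n x < rank n y"

text \<open>A column is (top, bottom); a tableau of shape (k,k) is a list of k columns.\<close>
type_synonym column = "letter \<times> letter"

definition is_tableau :: "nat \<Rightarrow> nat \<Rightarrow> column list \<Rightarrow> bool" where
  "is_tableau n k T \<longleftrightarrow> length T = k \<and>
     (\<forall>c\<in>set T. valid_letter n (fst c) \<and> valid_letter n (snd c))"

definition C1 :: "nat \<Rightarrow> column list \<Rightarrow> bool" where
  "C1 n T \<longleftrightarrow> (\<forall>j. Suc j < length T \<longrightarrow>
     le_D n (fst (T!j)) (fst (T!Suc j)) \<and> le_D n (snd (T!j)) (snd (T!Suc j)))"

definition C2 :: "nat \<Rightarrow> column list \<Rightarrow> bool" where
  "C2 n T \<longleftrightarrow> (\<forall>j < length T. \<not> le_D n (snd (T!j)) (fst (T!j)))"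

definition C3 :: "column list \<Rightarrow> bool" where
  "C3 T \<longleftrightarrow> (\<forall>j x. Suc j < length T \<longrightarrow>
     \<not> (fst (T!j) = x \<and> fst (T!Suc j) = x \<and> snd (T!Suc j) = bar x) \<and>
     \<not> (fst (T!j) = x \<and> snd (T!j) = bar x \<and> snd (T!Suc j) = bar x))"

definition C4 :: "nat \<Rightarrow> column list \<Rightarrow> bool" where
  "C4 n T \<longleftrightarrow> (\<forall>j j'. j < j' \<and> j' < length T \<longrightarrow>
     \<not> (T!j = (Unb (n-1), Unb n) \<and> T!j' = (Unb n, Bar (n-1))) \<and>
     \<not> (T!j = (Unb (n-1), Bar n) \<and> T!j' = (Bar n, Bar (n-1))))"

definition C5 :: "column list \<Rightarrow> bool" where
  "C5 T \<longleftrightarrow> (\<forall>c\<in>set T. c \<noteq> (Unb 1, Bar 1))"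

definition B_KN :: "nat \<Rightarrow> nat \<Rightarrow> column list set" where
  "B_KN n k = {T. is_tableau n k T \<and> C1 n T \<and> C2 n T \<and> C3 T \<and> C4 n T \<and> C5 T}"

definition tabT :: "nat \<Rightarrow> nat \<Rightarrow> column list set" where
  "tabT n s = {T. is_tableau n s T \<and> C1 n T \<and> C2 n T \<and> C4 n T}"

definition A_letters :: "nat \<Rightarrow> letter set" where
  "A_letters n = {Unb i | i. 1 \<le> i \<and> i \<le> n} \<union> {Bar n}"

definition conf1 :: "column list \<Rightarrow> letter \<Rightarrow> nat \<Rightarrow> bool" where
  "conf1 T a m \<longleftrightarrow> (\<exists>L b1 R. T = L @ [(a, b1)] @ replicate m (a, bar a) @ R \<and>
     b1 \<noteq> bar a \<and> (R = [] \<or> hd R \<noteq> (a, bar a)))"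

definition conf2 :: "column list \<Rightarrow> letter \<Rightarrow> nat \<Rightarrow> bool" where
  "conf2 T a m \<longleftrightarrow> (\<exists>L d2 R. T = L @ replicate m (a, bar a) @ [(d2, bar a)] @ R \<and>
     d2 \<noteq> a \<and> (L = [] \<or> last L \<noteq> (a, bar a)))"

definition conf3 :: "column list \<Rightarrow> letter \<Rightarrow> nat \<Rightarrow> bool" where
  "conf3 T a m \<longleftrightarrow> (\<exists>L R. T = L @ replicate (m + 1) (a, bar a) @ R \<and>
     (L = [] \<or> fst (last L) \<noteq> a) \<and> (R = [] \<or> snd (hd R) \<noteq> bar a))"

end

theory Submission
  imports Defs
begin

lemma le_D_trans: "le_D n x y \<Longrightarrow> le_D n y z \<Longrightarrow> le_D n x z"
  unfolding le_D_def by auto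

lemma le_D_antisym: "le_D n x y \<Longrightarrow> le_D n y x \<Longrightarrow> x = y"
  unfolding le_D_def by auto

lemma C1_mono:
  assumes "C1 n T" "i \<le> j" "j < length T"
  shows "le_D n (fst (T!i)) (fst (T!j)) \<and> le_D n (snd (T!i)) (snd (T!j))"
  using assms(2,3)
proof (induction j)
  case 0
  then show ?case by (simp add: le_D_def)
next
  case (Suc j)
  show ?case
  proof (cases "i = Suc j")
    case True
    then show ?thesis by (simp add: le_D_def)
  next
    case False
    then have ij: "i \<le> j" using Suc by simp
    have IH: "le_D n (fst (T!i)) (fst (T!j)) \<and> le_D n (snd (T!i)) (snd (T!j))"
      using Suc ij by simp
    have st: "le_D n (fst (T!j)) (fst (T!Suc j)) \<and> le_D n (snd (T!j)) (snd (T!Suc j))"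
      using assms(1) Suc.prems unfolding C1_def by blast
    show ?thesis using IH st le_D_trans by blast
  qed
qed

lemma A_of_col:
  assumes "valid_letter n x" "\<not> le_D n (bar x) x"
  shows "x \<in> A_letters n"
  using assms by (cases x) (auto simp: le_D_def A_letters_def)

lemma rank_bar:
  "x \<in> A_letters n \<Longrightarrow> rank n (bar x) = 2*n - rank n x \<and> rank n x \<le> n"
  by (auto simp: A_letters_def)

lemma bar_bar: "bar (bar x) = x"
  by (cases x) auto

lemma A_eq:
  assumes "x \<in> A_letters n" "y \<in> A_letters n" "le_D n x y" "le_D n (bar x) (bar y)"
  shows "x = y"
proof (rule ccontr)
  assume ne: "x \<noteq> y"
  then have "bar x \<noteq> bar y" by (metis bar_bar)
  with ne assms(3,4) have "rank n x < rank n y" "rank n (bar x) < rank n (bar y)"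
    unfolding le_D_def by auto
  with rank_bar[OF assms(1)] rank_bar[OF assms(2)] show False by linarith
qed

lemma col_A:
  assumes "T \<in> tabT n s" "i < length T" "T!i = (x, bar x)"
  shows "x \<in> A_letters n"
proof -
  have "T!i \<in> set T" using assms(2) by simp
  then have "valid_letter n (fst (T!i))" using assms(1) unfolding tabT_def is_tableau_def by blast
  then have "valid_letter n x" using assms(3) by simp
  moreover have "\<not> le_D n (snd (T!i)) (fst (T!i))" using assms(1,2) unfolding tabT_def C2_def by blast
  then have "\<not> le_D n (bar x) x" using assms(3) by simp
  ultimately show ?thesis by (rule A_of_col)
qed

lemma uniq_a:
  assumes "T \<in> tabT n s" "i < length T" "j < length T"
    "T!i = (x, bar x)" "T!j = (y, bar y)"
  shows "x = y"
proof -
  have C1: "C1 n T" using assms(1) by (simp add: tabT_def)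
  have xA: "x \<in> A_letters n" using col_A assms by blast
  have yA: "y \<in> A_letters n" using col_A assms by blast
  show ?thesis
  proof (cases "i \<le> j")
    case True
    from C1_mono[OF C1 True assms(3)] assms(4,5) have "le_D n x y" "le_D n (bar x) (bar y)" by auto
    then show ?thesis using A_eq xA yA by blast
  next
    case False
    then have "j \<le> i" by simp
    from C1_mono[OF C1 this assms(2)] assms(4,5) have "le_D n y x" "le_D n (bar y) (bar x)" by auto
    then show ?thesis using A_eq xA yA by metis
  qed
qed

lemma contig:
  assumes "T \<in> tabT n s" "i \<le> l" "l \<le> j" "j < length T" "T!i = c" "T!j = c"
  shows "T!l = c"
proof -
  have C1: "C1 n T" using assms(1) by (simp add: tabT_def)
  have "l < length T" using assms by simp
  from C1_mono[OF C1 assms(2) this] C1_mono[OF C1 assms(3,4)] assms(5,6)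
  have "fst (T!l) = fst c" "snd (T!l) = snd c" using le_D_antisym by metis+
  then show ?thesis by (simp add: prod_eq_iff)
qed


lemma no_c:
  assumes tab: "T \<in> tabT n s" and T: "T = L @ replicate M c @ R" and M: "M > 0"
    and hL: "L = [] \<or> last L \<noteq> c" and hR: "R = [] \<or> hd R \<noteq> c"
  shows "c \<notin> set L \<and> c \<notin> set R"
proof -
  have Tp: "T ! length L = c" using T M by (simp add: nth_append)
  have lenT: "length T = length L + M + length R" using T by simp
  have "c \<notin> set L"
  proof
    assume "c \<in> set L"
    then obtain i where i: "i < length L" "L!i = c" by (auto simp: in_set_conv_nth)
    then have Ti: "T!i = c" using T by (simp add: nth_append)
    have "L \<noteq> []" using i by auto
    then have lst: "T!(length L - 1) = last L" using T by (simp add: nth_append last_conv_nth)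
    have "T!(length L - 1) = c"
      using contig[OF tab _ _ _ Ti Tp] i M lenT by simp
    then show False using lst hL \<open>L \<noteq> []\<close> by simp
  qed
  moreover have "c \<notin> set R"
  proof
    assume "c \<in> set R"
    then obtain i where i: "i < length R" "R!i = c" by (auto simp: in_set_conv_nth)
    then have Ti: "T!(length L + M + i) = c" using T by (simp add: nth_append)
    have "R \<noteq> []" using i by auto
    then have hd: "T!(length L + M) = hd R" using T by (simp add: nth_append hd_conv_nth)
    have "T!(length L + M) = c"
      using contig[OF tab _ _ _ Tp Ti] i M lenT by simp
    then show False using hd hR \<open>R \<noteq> []\<close> by simp
  qed
  ultimately show ?thesis by simp
qed

lemma canon:
  assumes tab: "T \<in> tabT n s" and T: "T = L @ replicate M c @ R" and M: "M > 0"
    and hL: "L = [] \<or> last L \<noteq> c" and hR: "R = [] \<or> hd R \<noteq> c"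
  shows "L = takeWhile (\<lambda>x. x \<noteq> c) T \<and> M = length (filter (\<lambda>x. x = c) T)
     \<and> R = drop (length L + M) T"
proof -
  have nc: "c \<notin> set L" "c \<notin> set R" using no_c[OF assms] by auto
  have "takeWhile (\<lambda>x. x \<noteq> c) T = L"
    using T M nc(1) by (cases M) (auto simp: takeWhile_append)
  moreover have "filter (\<lambda>x. x = c) L = []" using nc(1) by (auto simp: filter_empty_conv)
  moreover have "filter (\<lambda>x. x = c) R = []" using nc(2) by (auto simp: filter_empty_conv)
  ultimately show ?thesis using T by simp
qed

definition Lc :: "column list \<Rightarrow> letter \<Rightarrow> column list" where
  "Lc T a = takeWhile (\<lambda>x. x \<noteq> (a, bar a)) T"
definition Nc :: "column list \<Rightarrow> letter \<Rightarrow> nat" where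
  "Nc T a = length (filter (\<lambda>x. x = (a, bar a)) T)"
definition Rc :: "column list \<Rightarrow> letter \<Rightarrow> column list" where
  "Rc T a = drop (length (Lc T a) + Nc T a) T"

lemma conf1_norm:
  assumes tab: "T \<in> tabT n s" and cf: "conf1 T a m" and m: "m > 0"
  shows "(\<exists>j < length T. T!j = (a, bar a)) \<and> m = Nc T a \<and> Lc T a \<noteq> [] \<and> fst (last (Lc T a)) = a"
proof -
  obtain L b1 R where T: "T = L @ [(a, b1)] @ replicate m (a, bar a) @ R"
    and b1: "b1 \<noteq> bar a" and hR: "R = [] \<or> hd R \<noteq> (a, bar a)"
    using cf unfolding conf1_def by blast
  have T': "T = (L @ [(a, b1)]) @ replicate m (a, bar a) @ R" using T by simp
  have hL: "L @ [(a, b1)] = [] \<or> last (L @ [(a, b1)]) \<noteq> (a, bar a)" using b1 by simp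
  from canon[OF tab T' m hL hR] have c: "L @ [(a, b1)] = Lc T a" "m = Nc T a"
    unfolding Lc_def Nc_def by auto
  have "T ! length (L @ [(a, b1)]) = (a, bar a)" "length (L @ [(a, b1)]) < length T"
    using T' m by (simp_all add: nth_append)
  then show ?thesis using c by (metis last_snoc fst_conv snoc_eq_iff_butlast)
qed

lemma conf2_norm:
  assumes tab: "T \<in> tabT n s" and cf: "conf2 T a m" and m: "m > 0"
  shows "(\<exists>j < length T. T!j = (a, bar a)) \<and> m = Nc T a \<and> Rc T a \<noteq> [] \<and> snd (hd (Rc T a)) = bar a"
proof -
  obtain L d2 R where T: "T = L @ replicate m (a, bar a) @ [(d2, bar a)] @ R"
    and d2: "d2 \<noteq> a" and hL: "L = [] \<or> last L \<noteq> (a, bar a)"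
    using cf unfolding conf2_def by blast
  have T': "T = L @ replicate m (a, bar a) @ ((d2, bar a) # R)" using T by simp
  have hR: "(d2, bar a) # R = [] \<or> hd ((d2, bar a) # R) \<noteq> (a, bar a)" using d2 by simp
  from canon[OF tab T' m hL hR] have c: "L = Lc T a" "m = Nc T a" "(d2, bar a) # R = Rc T a"
    unfolding Lc_def Nc_def Rc_def by auto
  have "T ! length L = (a, bar a)" "length L < length T"
    using T' m by (simp_all add: nth_append)
  then show ?thesis using c by (metis list.sel(1) list.distinct(1) snd_conv)
qed

lemma conf3_norm:
  assumes tab: "T \<in> tabT n s" and cf: "conf3 T a m"
  shows "(\<exists>j < length T. T!j = (a, bar a)) \<and> m + 1 = Nc T a
     \<and> (Lc T a = [] \<or> fst (last (Lc T a)) \<noteq> a) \<and> (Rc T a = [] \<or> snd (hd (Rc T a)) \<noteq> bar a)"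
proof -
  obtain L R where T: "T = L @ replicate (m+1) (a, bar a) @ R"
    and hL': "L = [] \<or> fst (last L) \<noteq> a" and hR': "R = [] \<or> snd (hd R) \<noteq> bar a"
    using cf unfolding conf3_def by blast
  have hL: "L = [] \<or> last L \<noteq> (a, bar a)" using hL' by auto
  have hR: "R = [] \<or> hd R \<noteq> (a, bar a)" using hR' by auto
  have m1: "0 < m + 1" by simp
  from canon[OF tab T m1 hL hR] have k: "L = Lc T a \<and> m + 1 = Nc T a \<and> R = drop (length L + (m+1)) T"
    unfolding Lc_def Nc_def by blast
  then have c: "L = Lc T a" "m + 1 = Nc T a" "R = Rc T a" unfolding Rc_def by metis+
  have "T ! length L = (a, bar a)" "length L < length T"
    using T by (simp_all add: nth_append)
  then show ?thesis using c hL' hR' by metis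
qed


lemma valid_T:
  assumes "T \<in> tabT n s" "j < length T"
  shows "valid_letter n (fst (T!j)) \<and> valid_letter n (snd (T!j))"
proof -
  have "T!j \<in> set T" using assms(2) by simp
  then show ?thesis using assms(1) unfolding tabT_def is_tableau_def by blast
qed

lemma le_Unb1: "valid_letter n x \<Longrightarrow> n \<ge> 1 \<Longrightarrow> le_D n x (Unb 1) \<Longrightarrow> x = Unb 1"
  by (cases x) (auto simp: le_D_def)

lemma ge_Bar1: "valid_letter n x \<Longrightarrow> n \<ge> 1 \<Longrightarrow> le_D n (Bar 1) x \<Longrightarrow> x = Bar 1"
  by (cases x) (auto simp: le_D_def)

lemma find_a:
  assumes viol: "\<not> C3 T \<or> \<not> C5 T"
  obtains i a where "i < length T" "T!i = (a, bar a)"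
proof -
  have "\<exists>i a. i < length T \<and> T!i = (a, bar a)"
  proof (cases "C3 T")
    case False
    then obtain j x where j: "Suc j < length T"
      "(fst (T!j) = x \<and> fst (T!Suc j) = x \<and> snd (T!Suc j) = bar x) \<or>
       (fst (T!j) = x \<and> snd (T!j) = bar x \<and> snd (T!Suc j) = bar x)"
      unfolding C3_def by blast
    from j(2) show ?thesis
    proof
      assume "fst (T!j) = x \<and> fst (T!Suc j) = x \<and> snd (T!Suc j) = bar x"
      then have "T!Suc j = (x, bar x)" by (simp add: prod_eq_iff)
      then show ?thesis using j(1) by blast
    next
      assume "fst (T!j) = x \<and> snd (T!j) = bar x \<and> snd (T!Suc j) = bar x"
      then have "T!j = (x, bar x)" by (simp add: prod_eq_iff)
      then show ?thesis using j(1) by (intro exI[of _ j]) auto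
    qed
  next
    case True
    then have "(Unb 1, Bar 1) \<in> set T" using viol unfolding C5_def by blast
    then obtain i where "i < length T" "T!i = (Unb 1, bar (Unb 1))" by (auto simp: in_set_conv_nth)
    then show ?thesis by blast
  qed
  then show ?thesis using that by blast
qed

lemma exist:
  assumes n1: "n \<ge> 1" and tab: "T \<in> tabT n s" and viol: "\<not> C3 T \<or> \<not> C5 T"
    and ne: "T \<noteq> replicate s (Unb 1, Bar 1)"
  shows "\<exists>a m. a \<in> A_letters n \<and> m > 0 \<and> (conf1 T a m \<or> conf2 T a m \<or> conf3 T a m)"
proof -
  obtain i a where i: "i < length T" "T!i = (a, bar a)" using find_a[OF viol] by blast
  define c where "c = (a, bar a)"
  have aA: "a \<in> A_letters n" using col_A[OF tab i] .
  have ua: "\<And>j y. j < length T \<Longrightarrow> T!j = (y, bar y) \<Longrightarrow> y = a"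
    using uniq_a[OF tab _ i(1) _ i(2)] by blast
  have lenT: "length T = s" using tab by (simp add: tabT_def is_tableau_def)
  have C1: "C1 n T" using tab by (simp add: tabT_def)
  define L where "L = takeWhile (\<lambda>x. x \<noteq> c) T"
  define rest where "rest = dropWhile (\<lambda>x. x \<noteq> c) T"
  define B where "B = takeWhile (\<lambda>x. x = c) rest"
  define R where "R = dropWhile (\<lambda>x. x = c) rest"
  have T: "T = L @ B @ R" unfolding L_def rest_def B_def R_def by simp
  have cT: "c \<in> set T" using i unfolding c_def by (metis nth_mem)
  have rne: "rest \<noteq> []" using cT unfolding rest_def by (simp add: dropWhile_eq_Nil_conv)
  have hr: "hd rest = c" using hd_dropWhile[of "\<lambda>x. x \<noteq> c" T] rne unfolding rest_def by auto
  obtain r' where r': "rest = c # r'" using rne hr by (cases rest) auto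
  have Bpos: "length B > 0" unfolding B_def r' by simp
  have "\<forall>y\<in>set B. y = c" unfolding B_def by (auto dest: set_takeWhileD)
  then have Brep: "B = replicate (length B) c" by (simp add: replicate_length_same)
  have Lnc: "c \<notin> set L" unfolding L_def by (auto dest: set_takeWhileD)
  have hL: "L = [] \<or> last L \<noteq> c" using Lnc by auto
  have hR: "R = [] \<or> hd R \<noteq> c" using hd_dropWhile[of "\<lambda>x. x = c" rest] unfolding R_def by auto
  define M where "M = length B"
  have T2: "T = L @ replicate M c @ R" using T Brep unfolding M_def by metis
  have M0: "M > 0" using Bpos M_def by simp
  show ?thesis
  proof (cases "L \<noteq> [] \<and> fst (last L) = a")
    case True
    then obtain L0 x where Ld: "L = L0 @ [x]" by (metis rev_exhaust)
    then have x: "fst x = a" "x \<noteq> c" using True hL by auto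
    then have "snd x \<noteq> bar a" unfolding c_def by (metis prod.collapse)
    moreover have "T = L0 @ [(a, snd x)] @ replicate M (a, bar a) @ R"
      using T2 Ld x(1) unfolding c_def by (simp add: prod_eq_iff)
    ultimately have "conf1 T a M" using hR unfolding conf1_def c_def by blast
    then show ?thesis using aA M0 by blast
  next
    case nL: False
    show ?thesis
    proof (cases "R \<noteq> [] \<and> snd (hd R) = bar a")
      case True
      then obtain r R0 where Rd: "R = r # R0" by (cases R) auto
      then have r: "snd r = bar a" "r \<noteq> c" using True hR by auto
      then have "fst r \<noteq> a" unfolding c_def by (metis prod.collapse)
      moreover have "T = L @ replicate M (a, bar a) @ [(fst r, bar a)] @ R0"
        using T2 Rd r(1) unfolding c_def by (simp add: prod_eq_iff)
      ultimately have "conf2 T a M" using hL unfolding conf2_def c_def by blast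
      then show ?thesis using aA M0 by blast
    next
      case nR: False
      show ?thesis
      proof (cases "M \<ge> 2")
        case True
        have "T = L @ replicate (M - 1 + 1) (a, bar a) @ R" using T2 True unfolding c_def by simp
        moreover have "L = [] \<or> fst (last L) \<noteq> a" using nL by blast
        moreover have "R = [] \<or> snd (hd R) \<noteq> bar a" using nR by blast
        ultimately have "conf3 T a (M - 1)" unfolding conf3_def by blast
        then show ?thesis using aA True by (intro exI[of _ a] exI[of _ "M - 1"]) auto
      next
        case False
        then have M1: "M = 1" using M0 by simp
        have Rnc: "c \<notin> set R" using no_c[OF tab T2 M0 hL hR] by blast
        have T3: "T = L @ c # R" using T2 M1 by simp
        define p where "p = length L"
        have lenT': "length T = p + 1 + length R" using T3 p_def by simp
        have Tp: "T!p = c" using T3 p_def by simp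
        have onlyp: "\<And>j. j < length T \<Longrightarrow> T!j = c \<Longrightarrow> j = p"
        proof -
          fix j assume j: "j < length T" "T!j = c"
          show "j = p"
          proof (rule ccontr)
            assume "j \<noteq> p"
            then consider "j < p" | "j > p" by linarith
            then show False
            proof cases
              case 1
              then have "T!j = L!j" using T3 p_def by (simp add: nth_append)
              then show False using 1 j Lnc p_def by (metis nth_mem)
            next
              case 2
              then have "T!j = R!(j - p - 1)" using T3 p_def by (simp add: nth_append)
              moreover have "j - p - 1 < length R" using 2 j lenT' by simp
              ultimately show False using j Rnc by (metis nth_mem)
            qed
          qed
        qed
        have lastL: "L \<noteq> [] \<Longrightarrow> T!(p - 1) = last L"
          using T3 p_def by (simp add: nth_append last_conv_nth)
        have hdR: "R \<noteq> [] \<Longrightarrow> T!(Suc p) = hd R"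
          using T3 p_def by (simp add: nth_append hd_conv_nth)
        show ?thesis
        proof (cases "C3 T")
          case False
          then obtain j x where j: "Suc j < length T"
            "(fst (T!j) = x \<and> fst (T!Suc j) = x \<and> snd (T!Suc j) = bar x) \<or>
             (fst (T!j) = x \<and> snd (T!j) = bar x \<and> snd (T!Suc j) = bar x)"
            unfolding C3_def by blast
          from j(2) show ?thesis
          proof
            assume A: "fst (T!j) = x \<and> fst (T!Suc j) = x \<and> snd (T!Suc j) = bar x"
            then have "T!Suc j = (x, bar x)" by (simp add: prod_eq_iff)
            then have "x = a" using ua j(1) by blast
            then have "T!Suc j = c" using \<open>T!Suc j = (x, bar x)\<close> c_def by simp
            then have "Suc j = p" using onlyp j(1) by blast
            then have "L \<noteq> []" using p_def by auto
            moreover have "T!j = last L" using lastL[OF \<open>L \<noteq> []\<close>] \<open>Suc j = p\<close> by (metis diff_Suc_1)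
            ultimately have "L \<noteq> []" "T!j = last L" by auto
            then show ?thesis using nL A \<open>x = a\<close> by simp
          next
            assume A: "fst (T!j) = x \<and> snd (T!j) = bar x \<and> snd (T!Suc j) = bar x"
            then have "T!j = (x, bar x)" by (simp add: prod_eq_iff)
            then have "x = a" using ua[of j x] j(1) by simp
            then have "T!j = c" using \<open>T!j = (x, bar x)\<close> c_def by simp
            then have "j = p" using onlyp j(1) by simp
            then have "R \<noteq> []" using j(1) lenT' by auto
            then have "T!Suc j = hd R" using hdR \<open>j = p\<close> by simp
            then show ?thesis using nR A \<open>x = a\<close> \<open>R \<noteq> []\<close> by simp
          qed
        next
          case True
          then have "(Unb 1, Bar 1) \<in> set T" using viol unfolding C5_def by blast
          then obtain k where k: "k < length T" "T!k = (Unb 1, bar (Unb 1))" by (auto simp: in_set_conv_nth)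
          then have a1: "a = Unb 1" using ua by blast
          have Le: "L = []"
          proof (rule ccontr)
            assume Lne: "L \<noteq> []"
            have "le_D n (fst (T!(p-1))) (fst (T!p))" using C1_mono[OF C1, of "p-1" p] lenT' by simp
            then have "le_D n (fst (T!(p-1))) (Unb 1)" using Tp a1 c_def by simp
            moreover have "valid_letter n (fst (T!(p-1)))" using valid_T[OF tab] lenT' by simp
            ultimately have "fst (T!(p-1)) = Unb 1" using le_Unb1 n1 by blast
            then show False using nL Lne lastL a1 by simp
          qed
          have Re: "R = []"
          proof (rule ccontr)
            assume Rne: "R \<noteq> []"
            then have sp: "Suc p < length T" using lenT' by simp
            have "le_D n (snd (T!p)) (snd (T!Suc p))" using C1_mono[OF C1, of p "Suc p"] sp by simp
            then have "le_D n (Bar 1) (snd (T!Suc p))" using Tp a1 c_def by simp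
            moreover have "valid_letter n (snd (T!Suc p))" using valid_T[OF tab sp] by simp
            ultimately have "snd (T!Suc p) = Bar 1" using ge_Bar1 n1 by blast
            then show False using nR Rne hdR a1 by simp
          qed
          have "T = replicate 1 (Unb 1, Bar 1)" using T3 Le Re a1 c_def by simp
          moreover have "s = 1" using lenT T3 Le Re by simp
          ultimately show ?thesis using ne by simp
        qed
      qed
    qed
  qed
qed

theorem proposition4p1:
  fixes n s :: nat and T :: "column list"
  assumes "n \<ge> 4" and "s \<ge> 1"
    and "T \<in> tabT n s" and "T \<notin> B_KN n s"
    and "T \<noteq> replicate s (Unb 1, Bar 1)"
  shows "\<exists>!am :: letter \<times> nat. fst am \<in> A_letters n \<and> snd am > 0 \<and>
           (conf1 T (fst am) (snd am) \<or> conf2 T (fst am) (snd am) \<or> conf3 T (fst am) (snd am))"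
proof (rule ex_ex1I)
  have n1: "n \<ge> 1" using assms(1) by simp
  have tab: "T \<in> tabT n s" by fact
  have viol: "\<not> C3 T \<or> \<not> C5 T" using assms(3,4) unfolding tabT_def B_KN_def by blast
  from exist[OF n1 tab viol assms(5)] obtain a m where
    "a \<in> A_letters n \<and> m > 0 \<and> (conf1 T a m \<or> conf2 T a m \<or> conf3 T a m)" by blast
  then show "\<exists>am :: letter \<times> nat. fst am \<in> A_letters n \<and> snd am > 0 \<and>
           (conf1 T (fst am) (snd am) \<or> conf2 T (fst am) (snd am) \<or> conf3 T (fst am) (snd am))"
    by (intro exI[of _ "(a, m)"]) simp
next
  fix x y :: "letter \<times> nat"
  assume hx: "fst x \<in> A_letters n \<and> snd x > 0 \<and>
           (conf1 T (fst x) (snd x) \<or> conf2 T (fst x) (snd x) \<or> conf3 T (fst x) (snd x))"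
    and hy: "fst y \<in> A_letters n \<and> snd y > 0 \<and>
           (conf1 T (fst y) (snd y) \<or> conf2 T (fst y) (snd y) \<or> conf3 T (fst y) (snd y))"
  have tab: "T \<in> tabT n s" by fact
  obtain a m where x: "x = (a, m)" by (cases x)
  obtain b k where y: "y = (b, k)" by (cases y)
  have ex: "\<exists>j < length T. T!j = (a, bar a)"
    using hx x conf1_norm[OF tab] conf2_norm[OF tab] conf3_norm[OF tab] by auto
  have ey: "\<exists>j < length T. T!j = (b, bar b)"
    using hy y conf1_norm[OF tab] conf2_norm[OF tab] conf3_norm[OF tab] by auto
  have ab: "a = b" using ex ey uniq_a[OF tab] by metis
  have P: "\<And>m. m > 0 \<Longrightarrow> conf1 T b m \<or> conf2 T b m \<or> conf3 T b m \<Longrightarrow>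
     (m = Nc T b \<and> Lc T b \<noteq> [] \<and> fst (last (Lc T b)) = b) \<or>
     (m = Nc T b \<and> Rc T b \<noteq> [] \<and> snd (hd (Rc T b)) = bar b) \<or>
     (m + 1 = Nc T b \<and> (Lc T b = [] \<or> fst (last (Lc T b)) \<noteq> b) \<and> (Rc T b = [] \<or> snd (hd (Rc T b)) \<noteq> bar b))"
    using conf1_norm[OF tab] conf2_norm[OF tab] conf3_norm[OF tab] by blast
  have Pm: "(m = Nc T b \<and> Lc T b \<noteq> [] \<and> fst (last (Lc T b)) = b) \<or>
     (m = Nc T b \<and> Rc T b \<noteq> [] \<and> snd (hd (Rc T b)) = bar b) \<or>
     (m + 1 = Nc T b \<and> (Lc T b = [] \<or> fst (last (Lc T b)) \<noteq> b) \<and> (Rc T b = [] \<or> snd (hd (Rc T b)) \<noteq> bar b))"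
    using P hx x ab by simp
  have Pk: "(k = Nc T b \<and> Lc T b \<noteq> [] \<and> fst (last (Lc T b)) = b) \<or>
     (k = Nc T b \<and> Rc T b \<noteq> [] \<and> snd (hd (Rc T b)) = bar b) \<or>
     (k + 1 = Nc T b \<and> (Lc T b = [] \<or> fst (last (Lc T b)) \<noteq> b) \<and> (Rc T b = [] \<or> snd (hd (Rc T b)) \<noteq> bar b))"
    using P hy y by simp
  have "m = k" using Pm Pk by auto
  then show "x = y" using x y ab by simp
qed

end
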